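(* Let $\mathbb{D}^n$ be the unit polydisk in $\mathbb{C}^n$, let $\mu:\mathbb{D}^n\to(0,\infty)$ be a weight, let $\psi\in H(\mathbb{D}^n)$ and let $\varphi=(\varphi_1,\dots,\varphi_n)$ be a holomorphic self-map of $\mathbb{D}^n$. If $W_{\psi,\varphi}:\mathcal{B}(\mathbb{D}^n)\to H^\infty_\mu(\mathbb{D}^n)$, $W_{\psi,\varphi}f=\psi\,(f\circ\varphi)$, is bounded, then $$\max\Big\{\|\psi\|_{H^\infty_\mu},\ \frac{1}{n(1+\log 2)}\vartheta_\mu(\psi,\varphi)\Big\}\le\|W_{\psi,\varphi}\|\le\max\{\|\psi\|_{H^\infty_\mu},\ \vartheta_\mu(\psi,\varphi)\},$$ where $\vartheta_\mu(\psi,\varphi)=\sup_{z\in\mathbb{D}^n}\tfrac12\mu(z)|\psi(z)|\sum_{j=1}^n\log\frac{1+|\varphi_j(z)|}{1-|\varphi_j(z)|}$.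
   Context: $H(\mathbb{D}^n)$ denotes holomorphic functions $\mathbb{D}^n\to\mathbb{C}$. A weight is a continuous strictly positive function $\mu$; $H^\infty_\mu(\mathbb{D}^n)=\{f\in H(\mathbb{D}^n):\|f\|_{H^\infty_\mu}=\sup_{z}\mu(z)|f(z)|<\infty\}$. The Bergman metric of $\mathbb{D}^n$ is $H_z(u,\bar v)=\sum_{j=1}^n\frac{u_j\bar v_j}{(1-|z_j|^2)^2}$. For $f\in H(\mathbb{D}^n)$, $Q_f(z)=\sup_{u\ne 0}\frac{|\sum_k \partial_k f(z)u_k|}{H_z(u,\bar u)^{1/2}}$, $\beta_f=\sup_z Q_f(z)$, $\mathcal{B}(\mathbb{D}^n)=\{f:\beta_f<\infty\}$ with norm $\|f\|_{\mathcal{B}}=|f(0)|+\beta_f$. *)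

theory Defs
  imports "HOL-Analysis.Analysis"
begin

text \<open>The unit polydisk in C^n, with n = CARD('n).\<close>
definition polydisk :: "(complex^'n) set" where
  "polydisk = {z. \<forall>j. cmod (z $ j) < 1}"

definition holo_pd :: "(complex^'n \<Rightarrow> complex) \<Rightarrow> bool" where
  "holo_pd f \<longleftrightarrow> (\<forall>z\<in>polydisk. \<exists>a::complex^'n.
      (f has_derivative (\<lambda>h. \<Sum>j\<in>UNIV. a $ j * h $ j)) (at z))"

definition pdiff :: "(complex^'n \<Rightarrow> complex) \<Rightarrow> 'n \<Rightarrow> complex^'n \<Rightarrow> complex" where
  "pdiff f k z = deriv (\<lambda>w. f (\<chi> i. if i = k then w else z $ i)) (z $ k)"

definition bergman :: "complex^'n \<Rightarrow> complex^'n \<Rightarrow> complex^'n \<Rightarrow> complex" where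
  "bergman z u v = (\<Sum>j\<in>UNIV. u $ j * cnj (v $ j) / complex_of_real ((1 - (cmod (z $ j))^2)^2))"

definition Qf :: "(complex^'n \<Rightarrow> complex) \<Rightarrow> complex^'n \<Rightarrow> real" where
  "Qf f z = Sup {cmod (\<Sum>k\<in>UNIV. pdiff f k z * u $ k) / sqrt (Re (bergman z u u)) | u. u \<noteq> 0}"

definition beta_f :: "(complex^'n \<Rightarrow> complex) \<Rightarrow> real" where
  "beta_f f = Sup (Qf f ` polydisk)"

definition bloch :: "(complex^'n \<Rightarrow> complex) set" where
  "bloch = {f. holo_pd f \<and> bdd_above (Qf f ` polydisk)}"

definition bloch_norm :: "(complex^'n \<Rightarrow> complex) \<Rightarrow> real" where
  "bloch_norm f = cmod (f 0) + beta_f f"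

definition weight_pd :: "(complex^'n \<Rightarrow> real) \<Rightarrow> bool" where
  "weight_pd \<mu> \<longleftrightarrow> continuous_on polydisk \<mu> \<and> (\<forall>z\<in>polydisk. 0 < \<mu> z)"

definition Hinf :: "(complex^'n \<Rightarrow> real) \<Rightarrow> (complex^'n \<Rightarrow> complex) set" where
  "Hinf \<mu> = {f. holo_pd f \<and> bdd_above ((\<lambda>z. \<mu> z * cmod (f z)) ` polydisk)}"

definition Hinf_norm :: "(complex^'n \<Rightarrow> real) \<Rightarrow> (complex^'n \<Rightarrow> complex) \<Rightarrow> real" where
  "Hinf_norm \<mu> f = Sup ((\<lambda>z. \<mu> z * cmod (f z)) ` polydisk)"

definition holo_self_map :: "(complex^'n \<Rightarrow> complex^'n) \<Rightarrow> bool" where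
  "holo_self_map \<phi> \<longleftrightarrow> (\<forall>j. holo_pd (\<lambda>z. \<phi> z $ j)) \<and> \<phi> ` polydisk \<subseteq> polydisk"

definition Wop :: "(complex^'n \<Rightarrow> complex) \<Rightarrow> (complex^'n \<Rightarrow> complex^'n)
    \<Rightarrow> (complex^'n \<Rightarrow> complex) \<Rightarrow> (complex^'n \<Rightarrow> complex)" where
  "Wop \<psi> \<phi> f = (\<lambda>z. \<psi> z * f (\<phi> z))"

definition W_bounded :: "(complex^'n \<Rightarrow> real) \<Rightarrow> (complex^'n \<Rightarrow> complex) \<Rightarrow> (complex^'n \<Rightarrow> complex^'n) \<Rightarrow> bool" where
  "W_bounded \<mu> \<psi> \<phi> \<longleftrightarrow> (\<forall>f\<in>bloch. Wop \<psi> \<phi> f \<in> Hinf \<mu>) \<and>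
     (\<exists>C. \<forall>f\<in>bloch. Hinf_norm \<mu> (Wop \<psi> \<phi> f) \<le> C * bloch_norm f)"

definition W_norm :: "(complex^'n \<Rightarrow> real) \<Rightarrow> (complex^'n \<Rightarrow> complex) \<Rightarrow> (complex^'n \<Rightarrow> complex^'n) \<Rightarrow> real" where
  "W_norm \<mu> \<psi> \<phi> = Sup {Hinf_norm \<mu> (Wop \<psi> \<phi> f) | f. f \<in> bloch \<and> bloch_norm f \<le> 1}"

definition theta_set :: "(complex^'n \<Rightarrow> real) \<Rightarrow> (complex^'n \<Rightarrow> complex) \<Rightarrow> (complex^'n \<Rightarrow> complex^'n) \<Rightarrow> real set" where
  "theta_set \<mu> \<psi> \<phi> = (\<lambda>z. 1/2 * \<mu> z * cmod (\<psi> z) *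
      (\<Sum>j\<in>UNIV. ln ((1 + cmod (\<phi> z $ j)) / (1 - cmod (\<phi> z $ j))))) ` polydisk"

definition theta :: "(complex^'n \<Rightarrow> real) \<Rightarrow> (complex^'n \<Rightarrow> complex) \<Rightarrow> (complex^'n \<Rightarrow> complex^'n) \<Rightarrow> real" where
  "theta \<mu> \<psi> \<phi> = Sup (theta_set \<mu> \<psi> \<phi>)"

end

theory Submission
  imports Defs
begin

lemma slice_deriv:
  fixes z :: "complex^'n"
  shows "((\<lambda>w. (\<chi> i. if i = k then w else z $ i)) has_derivative
          (\<lambda>h. (\<chi> i. if i = k then h else 0))) (at xx)"
proof -
  define L :: "complex \<Rightarrow> complex^'n" where "L = (\<lambda>h. (\<chi> i. if i = k then h else 0))"
  define c :: "complex^'n" where "c = (\<chi> i. if i = k then 0 else z $ i)"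
  have lin: "linear L"
    by (rule linearI) (auto simp: L_def vec_eq_iff)
  hence bl: "bounded_linear L" using linear_conv_bounded_linear by blast
  have eq: "(\<lambda>w. (\<chi> i. if i = k then w else z $ i)) = (\<lambda>w. L w + c)"
    by (auto simp: L_def c_def vec_eq_iff)
  show ?thesis unfolding eq L_def[symmetric]
    by (rule has_derivative_add_const) (rule bounded_linear_imp_has_derivative[OF bl])
qed

lemma pdiff_eq:
  fixes f :: "complex^'n \<Rightarrow> complex"
  assumes "(f has_derivative (\<lambda>h. \<Sum>j\<in>UNIV. a $ j * h $ j)) (at z)"
  shows "pdiff f k z = a $ k"
proof -
  have zz: "(\<chi> i. if i = k then z $ k else z $ i) = z" by (auto simp: vec_eq_iff)
  have "((\<lambda>w. f (\<chi> i. if i = k then w else z $ i)) has_derivative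
     ((\<lambda>h. \<Sum>j\<in>UNIV. a $ j * h $ j) \<circ> (\<lambda>h. (\<chi> i. if i = k then h else 0)))) (at (z $ k))"
    using diff_chain_at[OF slice_deriv[where k=k and z=z and xx="z $ k"], of f "(\<lambda>h. \<Sum>j\<in>UNIV. a $ j * h $ j)"] assms zz by (simp add: o_def)
  moreover have "((\<lambda>h. \<Sum>j\<in>UNIV. a $ j * h $ j) \<circ> (\<lambda>h. (\<chi> i. if i = k then h else 0))) = (\<lambda>h. a $ k * h)"
    by (auto simp: o_def if_distrib cong: if_cong)
  ultimately have "((\<lambda>w. f (\<chi> i. if i = k then w else z $ i)) has_field_derivative a $ k) (at (z $ k))"
    unfolding has_field_derivative_def by (metis (no_types, lifting))
  thus ?thesis unfolding pdiff_def by (rule DERIV_imp_deriv)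
qed

lemma berg_re:
  fixes z u :: "complex^'n"
  shows "Re (bergman z u u) = (\<Sum>j\<in>UNIV. (cmod (u $ j) / (1 - (cmod (z $ j))^2))^2)"
  unfolding bergman_def Re_sum
proof (rule sum.cong[OF refl])
  fix j
  have "u $ j * cnj (u $ j) = complex_of_real ((cmod (u $ j))^2)" by (simp only: complex_norm_square)
  hence "Re (u $ j * cnj (u $ j) / complex_of_real ((1 - (cmod (z $ j))\<^sup>2)\<^sup>2)) = (cmod (u $ j))^2 / ((1 - (cmod (z $ j))\<^sup>2)\<^sup>2)"
    by (metis Re_complex_of_real Re_divide_of_real)
  thus "Re (u $ j * cnj (u $ j) / complex_of_real ((1 - (cmod (z $ j))\<^sup>2)\<^sup>2)) = (cmod (u $ j) / (1 - (cmod (z $ j))\<^sup>2))\<^sup>2"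
    by (simp add: power_divide)
qed

lemma berg_pos:
  fixes z u :: "complex^'n"
  assumes "z \<in> polydisk" "u \<noteq> 0"
  shows "0 < Re (bergman z u u)"
proof -
  obtain j where j: "u $ j \<noteq> 0" using assms(2) by (auto simp: vec_eq_iff)
  have "cmod (z $ j) < 1" using assms(1) by (auto simp: polydisk_def)
  hence "(cmod (z $ j))^2 < 1" by (simp add: abs_square_less_1)
  hence "0 < (cmod (u $ j) / (1 - (cmod (z $ j))^2))^2" using j by simp
  thus ?thesis unfolding berg_re by (intro sum_pos2[where i=j]) auto
qed

lemma comp_le:
  fixes z u :: "complex^'n"
  shows "cmod (u $ k) / (1 - (cmod (z $ k))^2) \<le> sqrt (Re (bergman z u u))"
proof -
  have "(cmod (u $ k) / (1 - (cmod (z $ k))^2))^2 \<le> Re (bergman z u u)"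
    unfolding berg_re by (rule member_le_sum) auto
  thus ?thesis by (rule real_le_rsqrt)
qed

lemma polydisk_1: "z \<in> polydisk \<Longrightarrow> 0 < 1 - (cmod (z $ k))^2"
  by (auto simp: polydisk_def abs_square_less_1)

lemma elem_bound:
  fixes z u a :: "complex^'n"
  assumes "z \<in> polydisk" "u \<noteq> 0"
  shows "cmod (\<Sum>k\<in>UNIV. a $ k * u $ k) \<le> (\<Sum>k\<in>UNIV. cmod (a $ k) * (1 - (cmod (z $ k))^2)) * sqrt (Re (bergman z u u))"
proof -
  let ?B = "sqrt (Re (bergman z u u))"
  have "cmod (\<Sum>k\<in>UNIV. a $ k * u $ k) \<le> (\<Sum>k\<in>UNIV. cmod (a $ k * u $ k))"
    by (rule norm_sum)
  also have "\<dots> = (\<Sum>k\<in>UNIV. (cmod (a $ k) * (1 - (cmod (z $ k))^2)) * (cmod (u $ k) / (1 - (cmod (z $ k))^2)))"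
    apply (intro sum.cong refl)
    subgoal for k using polydisk_1[OF assms(1), of k] by (simp add: norm_mult)
    done
  also have "\<dots> \<le> (\<Sum>k\<in>UNIV. (cmod (a $ k) * (1 - (cmod (z $ k))^2)) * ?B)"
    apply (intro sum_mono mult_left_mono)
     apply (rule comp_le)
    subgoal for k using polydisk_1[OF assms(1), of k] by simp
    done
  also have "\<dots> = (\<Sum>k\<in>UNIV. cmod (a $ k) * (1 - (cmod (z $ k))^2)) * ?B"
    by (simp add: sum_distrib_right)
  finally show ?thesis .
qed

lemma Qf_props:
  fixes f :: "complex^'n \<Rightarrow> complex"
  assumes z: "z \<in> polydisk" and d: "(f has_derivative (\<lambda>h. \<Sum>j\<in>UNIV. a $ j * h $ j)) (at z)"
  shows "Qf f z \<le> (\<Sum>k\<in>UNIV. cmod (a $ k) * (1 - (cmod (z $ k))^2))"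
    and "0 \<le> Qf f z"
    and "\<And>u. u \<noteq> 0 \<Longrightarrow> cmod (\<Sum>k\<in>UNIV. a $ k * u $ k) \<le> Qf f z * sqrt (Re (bergman z u u))"
proof -
  let ?M = "(\<Sum>k\<in>UNIV. cmod (a $ k) * (1 - (cmod (z $ k))^2))"
  define S where "S = {cmod (\<Sum>k\<in>UNIV. pdiff f k z * u $ k) / sqrt (Re (bergman z u u)) | u. u \<noteq> 0}"
  have S: "S = {cmod (\<Sum>k\<in>UNIV. a $ k * u $ k) / sqrt (Re (bergman z u u)) | u. u \<noteq> 0}"
    unfolding S_def using pdiff_eq[OF d] by simp
  have Q: "Qf f z = Sup S" unfolding Qf_def S_def by simp
  have le: "x \<le> ?M" if xS: "x \<in> S" for x
  proof -
    obtain u where u: "u \<noteq> 0" "x = cmod (\<Sum>k\<in>UNIV. a $ k * u $ k) / sqrt (Re (bergman z u u))"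
      using xS S by auto
    have "0 < sqrt (Re (bergman z u u))" using berg_pos[OF z u(1)] by simp
    thus ?thesis using u elem_bound[OF z u(1), of a] by (simp add: divide_le_eq)
  qed
  have one: "(1::complex^'n) \<noteq> 0" by (simp add: vec_eq_iff)
  have ne: "S \<noteq> {}" using one S by auto
  have bdd: "bdd_above S" using le by (meson bdd_aboveI)
  show "Qf f z \<le> ?M" unfolding Q using le ne by (intro cSup_least) auto
  have mem: "cmod (\<Sum>k\<in>UNIV. a $ k * u $ k) / sqrt (Re (bergman z u u)) \<le> Qf f z" if "u \<noteq> 0" for u
    unfolding Q using that S bdd by (intro cSup_upper) auto
  have "0 \<le> cmod (\<Sum>k\<in>UNIV. a $ k * (1::complex^'n) $ k) / sqrt (Re (bergman z 1 1))" using berg_pos[OF z one] by simp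
  then show "0 \<le> Qf f z" using mem[OF one] by linarith
  show "cmod (\<Sum>k\<in>UNIV. a $ k * u $ k) \<le> Qf f z * sqrt (Re (bergman z u u))" if "u \<noteq> 0" for u
  proof -
    have "0 < sqrt (Re (bergman z u u))" using berg_pos[OF z that] by simp
    thus ?thesis using mem[OF that] by (simp add: divide_le_eq)
  qed
qed

lemma bloch_Qf_le_beta:
  assumes "f \<in> bloch" "z \<in> polydisk"
  shows "Qf f z \<le> beta_f f"
  using assms unfolding bloch_def beta_f_def by (auto intro: cSup_upper)

lemma zero_polydisk: "(0::complex^'n) \<in> polydisk"
  by (simp add: polydisk_def)

lemma beta_nonneg:
  assumes "f \<in> bloch"
  shows "0 \<le> beta_f f"
proof -
  obtain a where d: "(f has_derivative (\<lambda>h. \<Sum>j\<in>UNIV. a $ j * h $ j)) (at 0)"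
    using assms zero_polydisk unfolding bloch_def holo_pd_def by blast
  have "0 \<le> Qf f 0" by (rule Qf_props(2)[OF zero_polydisk d])
  also have "\<dots> \<le> beta_f f" by (rule bloch_Qf_le_beta[OF assms zero_polydisk])
  finally show ?thesis .
qed

lemma scaled_polydisk:
  fixes t :: real and w :: "complex^'n"
  assumes "w \<in> polydisk" "0 \<le> t" "t \<le> 1"
  shows "t *\<^sub>R w \<in> polydisk" and "\<And>j. cmod ((t *\<^sub>R w) $ j) = t * cmod (w $ j)"
proof -
  show cm: "\<And>j. cmod ((t *\<^sub>R w) $ j) = t * cmod (w $ j)" using assms(2) by simp
  show "t *\<^sub>R w \<in> polydisk" unfolding polydisk_def
  proof (intro CollectI allI)
    fix j
    have "t * cmod (w $ j) \<le> cmod (w $ j)" using assms(2,3) by (simp add: mult_left_le_one_le)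
    also have "\<dots> < 1" using assms(1) by (simp add: polydisk_def)
    finally have "t * cmod (w $ j) < 1" .
    thus "cmod ((t *\<^sub>R w) $ j) < 1" by (simp only: cm)
  qed
qed

lemma bloch_growth:
  fixes f :: "complex^'n \<Rightarrow> complex"
  assumes fb: "f \<in> bloch" and w: "w \<in> polydisk"
  shows "cmod (f w - f 0) \<le> beta_f f * ((\<Sum>j\<in>UNIV. ln (1 + cmod (w $ j)) - ln (1 - cmod (w $ j))) / 2)"
proof -
  define \<beta> where "\<beta> = beta_f f"
  have b0: "0 \<le> \<beta>" unfolding \<beta>_def by (rule beta_nonneg[OF fb])
  define r where "r j = cmod (w $ j)" for j
  have r0: "0 \<le> r j" for j by (simp add: r_def)
  have r1: "r j < 1" for j using w by (simp add: r_def polydisk_def)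
  have hol: "\<forall>z\<in>polydisk. \<exists>a::complex^'n. (f has_derivative (\<lambda>h. \<Sum>j\<in>UNIV. a $ j * h $ j)) (at z)"
    using fb by (simp add: bloch_def holo_pd_def)
  define A where "A z = (SOME a::complex^'n. (f has_derivative (\<lambda>h. \<Sum>j\<in>UNIV. a $ j * h $ j)) (at z))" for z
  have A: "(f has_derivative (\<lambda>h. \<Sum>j\<in>UNIV. A z $ j * h $ j)) (at z)" if "z \<in> polydisk" for z
    unfolding A_def by (rule someI_ex) (use hol that in blast)
  define g where "g t = f (t *\<^sub>R w)" for t :: real
  define g' where "g' t = (\<Sum>j\<in>UNIV. A (t *\<^sub>R w) $ j * w $ j)" for t :: real
  define h where "h t = \<beta> * ((\<Sum>j\<in>UNIV. ln (1 + t * r j) - ln (1 - t * r j)) / 2)" for t :: real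
  define h' where "h' t = \<beta> * (\<Sum>j\<in>UNIV. r j / (1 - t^2 * (r j)^2))" for t :: real
  have gd: "(g has_vector_derivative g' t) (at t within {0..1})" if t: "t \<in> {0..1}" for t
  proof -
    have tw: "t *\<^sub>R w \<in> polydisk" using scaled_polydisk(1)[OF w] t by auto
    have sd: "((\<lambda>s::real. s *\<^sub>R w) has_derivative (\<lambda>s. s *\<^sub>R w)) (at t)"
      by (rule bounded_linear_imp_has_derivative) (rule bounded_linear_scaleR_left)
    have "((f \<circ> (\<lambda>s::real. s *\<^sub>R w)) has_derivative ((\<lambda>h. \<Sum>j\<in>UNIV. A (t *\<^sub>R w) $ j * h $ j) \<circ> (\<lambda>s. s *\<^sub>R w))) (at t)"
      by (rule diff_chain_at[OF sd A[OF tw]])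
    moreover have "((\<lambda>h. \<Sum>j\<in>UNIV. A (t *\<^sub>R w) $ j * h $ j) \<circ> (\<lambda>s. s *\<^sub>R w)) = (\<lambda>s. s *\<^sub>R g' t)"
      by (simp add: g'_def fun_eq_iff scaleR_sum_right)
    ultimately have "(g has_vector_derivative g' t) (at t)"
      unfolding has_vector_derivative_def g_def by (simp add: o_def)
    thus ?thesis by (rule has_vector_derivative_at_within)
  qed
  have hd: "(h has_vector_derivative h' t) (at t within {0..1})" if t: "t \<in> {0..1}" for t
  proof -
    have p1: "0 < 1 + t * r j" for j using t r0[of j] by (simp add: add_pos_nonneg)
    have tr: "t * r j < 1" for j
    proof -
      have "t * r j \<le> r j" using t r0[of j] by (simp add: mult_left_le_one_le)
      thus ?thesis using r1[of j] by linarith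
    qed
    have p2: "0 < 1 - t * r j" for j using tr[of j] by simp
    have "(h has_real_derivative \<beta> * ((\<Sum>j\<in>UNIV. r j / (1 + t * r j) - (- r j) / (1 - t * r j)) / 2)) (at t)"
      unfolding h_def using p1 p2
      by (auto intro!: derivative_eq_intros)
    moreover have "(\<Sum>j\<in>UNIV. r j / (1 + t * r j) - (- r j) / (1 - t * r j)) / 2 = (\<Sum>j\<in>UNIV. r j / (1 - t^2 * (r j)^2))"
      unfolding sum_divide_distrib
    proof (rule sum.cong[OF refl])
      fix j
      have e: "1 - t^2 * (r j)^2 = (1 + t * r j) * (1 - t * r j)" by (simp add: algebra_simps power2_eq_square)
      have nz: "0 < 1 - t^2 * (r j)^2" unfolding e using p1[of j] p2[of j] by simp
      have "(r j / (1 + t * r j) - - r j / (1 - t * r j)) = r j * ((1 - t * r j) + (1 + t * r j)) / ((1 + t * r j) * (1 - t * r j))"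
        using p1[of j] p2[of j] by (simp add: field_simps)
      also have "\<dots> = 2 * (r j / (1 - t^2 * (r j)^2))" unfolding e[symmetric] by simp
      finally have X: "(r j / (1 + t * r j) - - r j / (1 - t * r j)) = 2 * (r j / (1 - t^2 * (r j)^2))" .
      show "(r j / (1 + t * r j) - - r j / (1 - t * r j)) / 2 = r j / (1 - t\<^sup>2 * (r j)\<^sup>2)"
        by (simp only: X) (rule nonzero_mult_div_cancel_left, simp)
    qed
    ultimately have "(h has_real_derivative h' t) (at t)" unfolding h'_def by simp
    thus ?thesis unfolding has_real_derivative_iff_has_vector_derivative
      by (rule has_vector_derivative_at_within)
  qed
  have gi: "(g' has_integral (g 1 - g 0)) {0..1}"
    by (rule fundamental_theorem_of_calculus) (auto intro: gd)
  have hi: "(h' has_integral (h 1 - h 0)) {0..1}"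
    by (rule fundamental_theorem_of_calculus) (auto intro: hd)
  have bound: "norm (g' t) \<le> h' t" if t: "t \<in> {0..1}" for t
  proof (cases "w = 0")
    case True
    thus ?thesis using b0 r0 by (auto simp: g'_def h'_def r_def intro!: mult_nonneg_nonneg sum_nonneg)
  next
    case False
    have tw: "t *\<^sub>R w \<in> polydisk" using scaled_polydisk(1)[OF w] t by auto
    have cm: "cmod ((t *\<^sub>R w) $ j) = t * r j" for j using scaled_polydisk(2)[OF w] t by (auto simp: r_def)
    have "cmod (g' t) \<le> Qf f (t *\<^sub>R w) * sqrt (Re (bergman (t *\<^sub>R w) w w))"
      unfolding g'_def by (rule Qf_props(3)[OF tw A[OF tw] False])
    also have "\<dots> \<le> \<beta> * (\<Sum>j\<in>UNIV. r j / (1 - t^2 * (r j)^2))"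
    proof (rule mult_mono)
      show "Qf f (t *\<^sub>R w) \<le> \<beta>" unfolding \<beta>_def by (rule bloch_Qf_le_beta[OF fb tw])
      have "sqrt (Re (bergman (t *\<^sub>R w) w w)) = L2_set (\<lambda>j. r j / (1 - t^2 * (r j)^2)) UNIV"
        unfolding berg_re L2_set_def cm r_def by (simp add: power_mult_distrib)
      also have "\<dots> \<le> (\<Sum>j\<in>UNIV. r j / (1 - t^2 * (r j)^2))"
      proof (rule L2_set_le_sum)
        fix j
        have "0 < 1 - (cmod ((t *\<^sub>R w) $ j))^2" by (rule polydisk_1[OF tw])
        hence "0 < 1 - t^2 * (r j)^2" unfolding cm by (simp add: power_mult_distrib)
        thus "0 \<le> r j / (1 - t^2 * (r j)^2)" using r0[of j] by simp
      qed
      finally show "sqrt (Re (bergman (t *\<^sub>R w) w w)) \<le> (\<Sum>j\<in>UNIV. r j / (1 - t^2 * (r j)^2))" .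
      show "0 \<le> \<beta>" by (rule b0)
      show "0 \<le> sqrt (Re (bergman (t *\<^sub>R w) w w))" using berg_pos[OF tw False] by simp
    qed
    finally show ?thesis unfolding h'_def by simp
  qed
  have "norm (integral {0..1} g') \<le> integral {0..1} h'"
    using gi hi bound by (intro integral_norm_bound_integral) auto
  hence "norm (g 1 - g 0) \<le> h 1 - h 0" using gi hi by (simp add: integral_unique)
  thus ?thesis unfolding g_def h_def \<beta>_def r_def by simp
qed

lemma not_nonpos_1: "cmod (\<zeta>::complex) < 1 \<Longrightarrow> 1 + \<zeta> \<notin> \<real>\<^sub>\<le>\<^sub>0 \<and> 1 - \<zeta> \<notin> \<real>\<^sub>\<le>\<^sub>0"
  using abs_Re_le_cmod[of \<zeta>] by (auto simp: complex_nonpos_Reals_iff)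

lemma F_deriv:
  fixes \<zeta> :: complex and N :: real
  assumes "cmod \<zeta> < 1" and N: "N \<noteq> 0"
  shows "((\<lambda>\<zeta>. (Ln (1 + \<zeta>) - Ln (1 - \<zeta>)) / (2 * N)) has_field_derivative (1 / N) / (1 - \<zeta>^2)) (at \<zeta>)"
proof -
  have a: "1 + \<zeta> \<notin> \<real>\<^sub>\<le>\<^sub>0" "1 - \<zeta> \<notin> \<real>\<^sub>\<le>\<^sub>0" using not_nonpos_1[OF assms(1)] by auto
  have nz: "1 + \<zeta> \<noteq> 0" "1 - \<zeta> \<noteq> 0" using a by auto
  have e: "1 - \<zeta>^2 = (1 + \<zeta>) * (1 - \<zeta>)" by (simp add: algebra_simps power2_eq_square)
  show ?thesis
  proof -
    have d1: "((\<lambda>\<zeta>. Ln (1 + \<zeta>)) has_field_derivative inverse (1 + \<zeta>) * 1) (at \<zeta>)"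
      by (rule DERIV_chain2[where g="\<lambda>\<zeta>. 1 + \<zeta>" and x=\<zeta>, OF has_field_derivative_Ln[OF a(1)]]) (auto intro!: derivative_eq_intros)
    have d2: "((\<lambda>\<zeta>. Ln (1 - \<zeta>)) has_field_derivative inverse (1 - \<zeta>) * (-1)) (at \<zeta>)"
      by (rule DERIV_chain2[where g="\<lambda>\<zeta>. 1 - \<zeta>" and x=\<zeta>, OF has_field_derivative_Ln[OF a(2)]]) (auto intro!: derivative_eq_intros)
    have "((\<lambda>\<zeta>. (Ln (1 + \<zeta>) - Ln (1 - \<zeta>)) / (2 * N)) has_field_derivative
        (inverse (1 + \<zeta>) * 1 - inverse (1 - \<zeta>) * (-1)) / (2 * N)) (at \<zeta>)"
      by (intro DERIV_cdivide DERIV_diff d1 d2)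
    moreover have "(inverse (1 + \<zeta>) * 1 - inverse (1 - \<zeta>) * (-1)) / (2 * N) = (1 / N) / (1 - \<zeta>^2)"
    proof -
      have X: "(1 + \<zeta>) * (1 - \<zeta>) \<noteq> 0" using nz by simp
      have NN: "complex_of_real N \<noteq> 0" using N by simp
      have q: "inverse (1 + \<zeta>) * 1 - inverse (1 - \<zeta>) * (-1) = 2 / ((1 + \<zeta>) * (1 - \<zeta>))"
        using nz by (simp add: field_simps)
      have g: "\<And>Y M::complex. Y \<noteq> 0 \<Longrightarrow> M \<noteq> 0 \<Longrightarrow> (2 / Y) / (2 * M) = (1 / M) / Y"
        by (simp add: field_simps)
      show ?thesis unfolding e q using g[OF X NN] by simp
    qed
    ultimately show ?thesis by simp
  qed
qed

lemma csgn: "cnj (sgn x) * x = complex_of_real (cmod x)"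
proof (cases "x = 0")
  case False
  have "cnj (sgn x) * x = (cnj x * x) / complex_of_real (cmod x)"
    by (simp add: sgn_div_norm scaleR_conv_of_real divide_inverse_commute)
  also have "cnj x * x = complex_of_real ((cmod x)^2)" by (simp only: complex_norm_square mult.commute)
  finally show ?thesis using False by (simp add: power2_eq_square)
qed simp

lemma cmod_csgn_le: "cmod (cnj (sgn x)) \<le> 1"
  by (cases "x = 0") (simp_all add: norm_sgn)

lemma test_fn:
  fixes w :: "complex^'n"
  assumes w: "w \<in> polydisk"
  shows "\<exists>G. G \<in> bloch \<and> bloch_norm G \<le> 1 \<and>
     cmod (G w) = (\<Sum>j\<in>UNIV. ln ((1 + cmod (w $ j)) / (1 - cmod (w $ j)))) / (2 * real CARD('n))"
proof -
  define N where "N = real CARD('n)"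
  have N0: "0 < N" unfolding N_def by simp
  define c where "c j = cnj (sgn (w $ j))" for j
  have c1: "cmod (c j) \<le> 1" for j unfolding c_def by (rule cmod_csgn_le)
  define F where "F \<zeta> = (Ln (1 + \<zeta>) - Ln (1 - \<zeta>)) / (2 * complex_of_real N)" for \<zeta>
  define G where "G z = (\<Sum>j\<in>UNIV. F (c j * z $ j))" for z :: "complex^'n"
  define a where "a z = (\<chi> j. c j * ((1 / complex_of_real N) / (1 - (c j * z $ j)^2)))" for z :: "complex^'n"
  have zeta_lt: "cmod (c j * z $ j) \<le> cmod (z $ j)" for j z
    using c1[of j] by (simp add: norm_mult mult_left_le_one_le)
  have Gd: "(G has_derivative (\<lambda>h. \<Sum>j\<in>UNIV. a z $ j * h $ j)) (at z)" if z: "z \<in> polydisk" for z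
  proof -
    have each: "((\<lambda>z. F (c j * z $ j)) has_derivative
        ((*) ((1 / complex_of_real N) / (1 - (c j * z $ j)^2)) \<circ> (\<lambda>h. c j * h $ j))) (at z)" for j
    proof -
      have lt: "cmod (c j * z $ j) < 1" using zeta_lt[of j z] z by (auto simp: polydisk_def intro: le_less_trans)
      have bl: "bounded_linear (\<lambda>h::complex^'n. c j * h $ j)"
        by (rule bounded_linear_compose[OF bounded_linear_mult_right bounded_linear_vec_nth])
      have Fd: "(F has_field_derivative (1 / complex_of_real N) / (1 - (c j * z $ j)^2)) (at (c j * z $ j))"
        unfolding F_def using F_deriv[OF lt, of N] N0 by simp
      show ?thesis
        using diff_chain_at[OF bounded_linear_imp_has_derivative[OF bl] Fd[unfolded has_field_derivative_def]]
        by (simp add: o_def)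
    qed
    have "(G has_derivative (\<lambda>h. \<Sum>j\<in>UNIV. ((*) ((1 / complex_of_real N) / (1 - (c j * z $ j)^2)) \<circ> (\<lambda>h. c j * h $ j)) h)) (at z)"
      unfolding G_def by (rule has_derivative_sum) (rule each)
    moreover have "(\<lambda>h. \<Sum>j\<in>UNIV. ((*) ((1 / complex_of_real N) / (1 - (c j * z $ j)^2)) \<circ> (\<lambda>h. c j * h $ j)) h)
       = (\<lambda>h. \<Sum>j\<in>UNIV. a z $ j * h $ j)"
      by (auto simp: a_def fun_eq_iff mult_ac)
    ultimately show ?thesis by simp
  qed
  have Qle: "Qf G z \<le> 1" if z: "z \<in> polydisk" for z
  proof -
    have "Qf G z \<le> (\<Sum>k\<in>UNIV. cmod (a z $ k) * (1 - (cmod (z $ k))^2))"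
      by (rule Qf_props(1)[OF z Gd[OF z]])
    also have "\<dots> \<le> (\<Sum>k\<in>(UNIV::'n set). 1 / N)"
    proof (intro sum_mono)
      fix k
      let ?\<zeta> = "c k * z $ k"
      have p: "0 < 1 - (cmod (z $ k))^2" by (rule polydisk_1[OF z])
      have "(cmod ?\<zeta>)^2 \<le> (cmod (z $ k))^2" using zeta_lt[of k z] by (simp add: power_mono)
      moreover have "1 - (cmod ?\<zeta>)^2 \<le> cmod (1 - ?\<zeta>^2)"
        using norm_triangle_ineq2[of 1 "?\<zeta>^2"] by (simp add: norm_power)
      ultimately have q: "1 - (cmod (z $ k))^2 \<le> cmod (1 - ?\<zeta>^2)" by linarith
      have q0: "0 < cmod (1 - ?\<zeta>^2)" using p q by linarith
      have "cmod (a z $ k) = cmod (c k) * (1 / N) / cmod (1 - ?\<zeta>^2)"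
        unfolding a_def using N0 by (simp add: norm_mult norm_divide)
      also have "\<dots> \<le> (1 / N) / cmod (1 - ?\<zeta>^2)"
        using c1[of k] N0 q0 by (intro divide_right_mono) (auto simp: mult_left_le_one_le divide_right_mono)
      finally have A1: "cmod (a z $ k) \<le> (1 / N) / cmod (1 - ?\<zeta>^2)" .
      have "cmod (a z $ k) * (1 - (cmod (z $ k))^2) \<le> (1 / N) / cmod (1 - ?\<zeta>^2) * (1 - (cmod (z $ k))^2)"
        using mult_right_mono[OF A1 less_imp_le[OF p]] .
      also have "\<dots> = (1 / N) * ((1 - (cmod (z $ k))^2) / cmod (1 - ?\<zeta>^2))" by simp
      also have "\<dots> \<le> (1 / N) * 1"
        using q q0 N0 by (intro mult_left_mono) (auto simp: divide_le_eq)
      finally show "cmod (a z $ k) * (1 - (cmod (z $ k))^2) \<le> 1 / N" by simp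
    qed
    also have "\<dots> = 1" using N0 unfolding N_def by simp
    finally show ?thesis .
  qed
  have holo: "holo_pd G" unfolding holo_pd_def using Gd by blast
  have bdd: "bdd_above (Qf G ` polydisk)" by (rule bdd_aboveI2[where M=1]) (rule Qle)
  have Gb: "G \<in> bloch" unfolding bloch_def using holo bdd by simp
  have beta1: "beta_f G \<le> 1" unfolding beta_f_def
    using Qle zero_polydisk by (intro cSup_least) auto
  have G0: "G 0 = 0" unfolding G_def F_def by simp
  have bn: "bloch_norm G \<le> 1" unfolding bloch_norm_def G0 using beta1 by simp
  define r where "r j = cmod (w $ j)" for j
  have r0: "0 \<le> r j" for j by (simp add: r_def)
  have r1: "r j < 1" for j using w by (simp add: r_def polydisk_def)
  have Fr: "F (c j * w $ j) = complex_of_real ((ln (1 + r j) - ln (1 - r j)) / (2 * N))" for j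
  proof -
    have "c j * w $ j = complex_of_real (r j)" unfolding c_def r_def by (rule csgn)
    moreover have "1 + complex_of_real (r j) = complex_of_real (1 + r j)" by simp
    moreover have "1 - complex_of_real (r j) = complex_of_real (1 - r j)" by simp
    moreover have "Ln (complex_of_real (1 + r j)) = complex_of_real (ln (1 + r j))"
      using r0[of j] by (intro Ln_of_real) simp
    moreover have "Ln (complex_of_real (1 - r j)) = complex_of_real (ln (1 - r j))"
      using r1[of j] by (intro Ln_of_real) simp
    ultimately show ?thesis unfolding F_def by simp
  qed
  have Gw: "G w = complex_of_real (\<Sum>j\<in>UNIV. (ln (1 + r j) - ln (1 - r j)) / (2 * N))"
    unfolding G_def Fr by simp
  have nn: "0 \<le> (ln (1 + r j) - ln (1 - r j)) / (2 * N)" for j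
  proof -
    have "ln (1 - r j) \<le> ln (1 + r j)" using r0[of j] r1[of j] by simp
    thus ?thesis using N0 by simp
  qed
  have "cmod (G w) = (\<Sum>j\<in>UNIV. (ln (1 + r j) - ln (1 - r j)) / (2 * N))"
    unfolding Gw norm_of_real using nn by (simp add: sum_nonneg)
  also have "\<dots> = (\<Sum>j\<in>UNIV. ln ((1 + r j) / (1 - r j))) / (2 * N)"
    unfolding sum_divide_distrib
  proof (intro sum.cong refl)
    fix j
    have "0 < 1 + r j" "0 < 1 - r j" using r0[of j] r1[of j] by auto
    thus "(ln (1 + r j) - ln (1 - r j)) / (2 * N) = ln ((1 + r j) / (1 - r j)) / (2 * N)"
      by (simp add: ln_div)
  qed
  finally show ?thesis using Gb bn unfolding r_def N_def by blast
qed

lemma ln_ratio_sum: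
  fixes w :: "complex^'n"
  assumes "w \<in> polydisk"
  shows "(\<Sum>j\<in>UNIV. ln (1 + cmod (w $ j)) - ln (1 - cmod (w $ j))) = (\<Sum>j\<in>UNIV. ln ((1 + cmod (w $ j)) / (1 - cmod (w $ j))))"
    and "0 \<le> (\<Sum>j\<in>UNIV. ln ((1 + cmod (w $ j)) / (1 - cmod (w $ j))))"
proof -
  have p: "0 < 1 + cmod (w $ j)" "0 < 1 - cmod (w $ j)" for j
    using assms by (auto simp: polydisk_def add_pos_nonneg)
  show "(\<Sum>j\<in>UNIV. ln (1 + cmod (w $ j)) - ln (1 - cmod (w $ j))) = (\<Sum>j\<in>UNIV. ln ((1 + cmod (w $ j)) / (1 - cmod (w $ j))))"
  proof (intro sum.cong refl)
    fix j
    show "ln (1 + cmod (w $ j)) - ln (1 - cmod (w $ j)) = ln ((1 + cmod (w $ j)) / (1 - cmod (w $ j)))"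
      using p[of j] by (simp add: ln_div)
  qed
  show "0 \<le> (\<Sum>j\<in>UNIV. ln ((1 + cmod (w $ j)) / (1 - cmod (w $ j))))"
  proof (intro sum_nonneg)
    fix j
    have "1 \<le> (1 + cmod (w $ j)) / (1 - cmod (w $ j))" using p[of j] by (simp add: le_divide_eq)
    thus "0 \<le> ln ((1 + cmod (w $ j)) / (1 - cmod (w $ j)))" by simp
  qed
qed

lemma const_deriv: "((\<lambda>_::complex^'n. 1::complex) has_derivative (\<lambda>h. \<Sum>j\<in>UNIV. (0::complex^'n) $ j * h $ j)) (at z)"
  by (simp add: has_derivative_const)

lemma const_im: "Qf (\<lambda>_::complex^'n. 1::complex) ` polydisk = {0}"
proof -
  have Q: "Qf (\<lambda>_::complex^'n. 1::complex) z = 0" if "z \<in> polydisk" for z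
    using Qf_props(1,2)[OF that const_deriv] by simp
  show ?thesis using Q zero_polydisk by force
qed

lemma const_bloch1: "(\<lambda>_. 1) \<in> (bloch :: (complex^'n \<Rightarrow> complex) set)"
proof -
  have "\<forall>z\<in>polydisk. \<exists>a::complex^'n. ((\<lambda>_::complex^'n. 1::complex) has_derivative (\<lambda>h. \<Sum>j\<in>UNIV. a $ j * h $ j)) (at z)"
    using const_deriv by blast
  moreover have "bdd_above (Qf (\<lambda>_::complex^'n. 1::complex) ` polydisk)" unfolding const_im by simp
  ultimately show ?thesis unfolding bloch_def holo_pd_def by simp
qed

lemma const_bloch2: "bloch_norm (\<lambda>_::complex^'n. 1) = 1"
  unfolding bloch_norm_def beta_f_def const_im by simp

theorem theorem5p2:
  fixes \<mu> :: "complex^'n \<Rightarrow> real" and \<psi> :: "complex^'n \<Rightarrow> complex"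
    and \<phi> :: "complex^'n \<Rightarrow> complex^'n"
  assumes "weight_pd \<mu>" and "holo_pd \<psi>" and "holo_self_map \<phi>"
    and "W_bounded \<mu> \<psi> \<phi>"
  shows "bdd_above (theta_set \<mu> \<psi> \<phi>) \<and>
    max (Hinf_norm \<mu> \<psi>) (theta \<mu> \<psi> \<phi> / (real CARD('n) * (1 + ln 2))) \<le> W_norm \<mu> \<psi> \<phi> \<and>
    W_norm \<mu> \<psi> \<phi> \<le> max (Hinf_norm \<mu> \<psi>) (theta \<mu> \<psi> \<phi>)"
proof -
  have \<mu>pos: "0 < \<mu> z" if "z \<in> polydisk" for z using assms(1) that by (simp add: weight_pd_def)
  have \<phi>pd: "\<phi> z \<in> polydisk" if "z \<in> polydisk" for z using assms(3) that by (auto simp: holo_self_map_def)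
  have inH: "Wop \<psi> \<phi> f \<in> Hinf \<mu>" if "f \<in> bloch" for f using assms(4) that by (simp add: W_bounded_def)
  obtain C where C: "\<And>f. f \<in> bloch \<Longrightarrow> Hinf_norm \<mu> (Wop \<psi> \<phi> f) \<le> C * bloch_norm f"
    using assms(4) by (auto simp: W_bounded_def)
  have Hle: "\<mu> z * cmod (Wop \<psi> \<phi> f z) \<le> Hinf_norm \<mu> (Wop \<psi> \<phi> f)" if "f \<in> bloch" "z \<in> polydisk" for f z
    using inH[OF that(1)] that(2) unfolding Hinf_def Hinf_norm_def by (auto intro: cSup_upper)
  have bn0: "0 \<le> bloch_norm f" if "f \<in> bloch" for f
    using beta_nonneg[OF that] by (simp add: bloch_norm_def)
  define WS where "WS = {Hinf_norm \<mu> (Wop \<psi> \<phi> f) | f. f \<in> bloch \<and> bloch_norm f \<le> 1}"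
  have Wn: "W_norm \<mu> \<psi> \<phi> = Sup WS" unfolding W_norm_def WS_def ..
  have bddWS: "bdd_above WS"
  proof (rule bdd_aboveI)
    fix x assume "x \<in> WS"
    then obtain f where f: "f \<in> bloch" "bloch_norm f \<le> 1" "x = Hinf_norm \<mu> (Wop \<psi> \<phi> f)"
      unfolding WS_def by blast
    have "C * bloch_norm f \<le> \<bar>C\<bar> * bloch_norm f" using bn0[OF f(1)] by (simp add: mult_right_mono)
    also have "\<dots> \<le> \<bar>C\<bar>" using f(2) bn0[OF f(1)] by (simp add: mult_left_le)
    finally show "x \<le> \<bar>C\<bar>" using C[OF f(1)] f(3) by simp
  qed
  have Wle: "Hinf_norm \<mu> (Wop \<psi> \<phi> f) \<le> W_norm \<mu> \<psi> \<phi>" if "f \<in> bloch" "bloch_norm f \<le> 1" for f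
    unfolding Wn using bddWS that by (intro cSup_upper) (auto simp: WS_def)
  have W1: "Wop \<psi> \<phi> (\<lambda>_. 1) = \<psi>" by (simp add: Wop_def)
  have \<psi>H: "\<psi> \<in> Hinf \<mu>" using inH[OF const_bloch1] W1 by simp
  have "Hinf_norm \<mu> (Wop \<psi> \<phi> (\<lambda>_. 1)) \<le> W_norm \<mu> \<psi> \<phi>"
    by (rule Wle[OF const_bloch1]) (simp add: const_bloch2)
  hence \<psi>le: "Hinf_norm \<mu> \<psi> \<le> W_norm \<mu> \<psi> \<phi>" unfolding W1 .
  have \<psi>elem: "\<mu> z * cmod (\<psi> z) \<le> Hinf_norm \<mu> \<psi>" if "z \<in> polydisk" for z
    using \<psi>H that unfolding Hinf_def Hinf_norm_def by (auto intro: cSup_upper)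
  define N where "N = real CARD('n)"
  have N0: "0 < N" unfolding N_def by simp
  define S where "S w = (\<Sum>j\<in>UNIV. ln ((1 + cmod (w $ j)) / (1 - cmod (w $ j))))" for w :: "complex^'n"
  have ts: "theta_set \<mu> \<psi> \<phi> = (\<lambda>z. 1/2 * \<mu> z * cmod (\<psi> z) * S (\<phi> z)) ` polydisk"
    unfolding theta_set_def S_def ..
  have telem: "1/2 * \<mu> z * cmod (\<psi> z) * S (\<phi> z) \<le> N * W_norm \<mu> \<psi> \<phi>" if z: "z \<in> polydisk" for z
  proof -
    obtain G where G: "G \<in> bloch" "bloch_norm G \<le> 1" "cmod (G (\<phi> z)) = S (\<phi> z) / (2 * N)"
      using test_fn[OF \<phi>pd[OF z]] unfolding S_def N_def by blast
    have "1/2 * \<mu> z * cmod (\<psi> z) * S (\<phi> z) = N * (\<mu> z * cmod (Wop \<psi> \<phi> G z))"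
      using N0 G(3) by (simp add: Wop_def norm_mult field_simps)
    also have "\<dots> \<le> N * W_norm \<mu> \<psi> \<phi>"
      using Hle[OF G(1) z] Wle[OF G(1,2)] N0 by (intro mult_left_mono) auto
    finally show ?thesis .
  qed
  have bddT: "bdd_above (theta_set \<mu> \<psi> \<phi>)" unfolding ts using telem by (rule bdd_aboveI2)
  have tnn: "0 \<le> 1/2 * \<mu> z * cmod (\<psi> z) * S (\<phi> z)" if z: "z \<in> polydisk" for z
    using \<mu>pos[OF z] ln_ratio_sum(2)[OF \<phi>pd[OF z]] unfolding S_def by simp
  have tup: "1/2 * \<mu> z * cmod (\<psi> z) * S (\<phi> z) \<le> theta \<mu> \<psi> \<phi>" if z: "z \<in> polydisk" for z
    unfolding theta_def ts by (rule cSup_upper[OF imageI[OF z]]) (use bddT ts in simp)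
  have th0: "0 \<le> theta \<mu> \<psi> \<phi>" using tnn[OF zero_polydisk] tup[OF zero_polydisk] by linarith
  have thN: "theta \<mu> \<psi> \<phi> \<le> N * W_norm \<mu> \<psi> \<phi>"
    unfolding theta_def ts using telem zero_polydisk by (intro cSup_least) auto
  have low2: "theta \<mu> \<psi> \<phi> / (N * (1 + ln 2)) \<le> W_norm \<mu> \<psi> \<phi>"
  proof -
    have "theta \<mu> \<psi> \<phi> / (N * (1 + ln 2)) \<le> theta \<mu> \<psi> \<phi> / N"
    proof (rule divide_left_mono)
      have l2: "0 < 1 + ln (2::real)" proof -
        have "0 < ln (2::real)" by (rule ln_gt_zero) simp
        thus ?thesis by linarith
      qed
      show "N \<le> N * (1 + ln 2)" using N0 l2 by (simp add: mult_le_cancel_left1)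
      show "0 \<le> theta \<mu> \<psi> \<phi>" by (rule th0)
      show "0 < N * (1 + ln 2) * N" using N0 l2 by simp
    qed
    also have "\<dots> \<le> W_norm \<mu> \<psi> \<phi>" using thN N0 by (simp add: divide_le_eq mult.commute)
    finally show ?thesis .
  qed
  define M where "M = max (Hinf_norm \<mu> \<psi>) (theta \<mu> \<psi> \<phi>)"
  have M0: "0 \<le> M" using th0 by (simp add: M_def)
  have up: "Hinf_norm \<mu> (Wop \<psi> \<phi> f) \<le> M" if f: "f \<in> bloch" "bloch_norm f \<le> 1" for f
    unfolding Hinf_norm_def
  proof (rule cSup_least)
    show "(\<lambda>z. \<mu> z * cmod (Wop \<psi> \<phi> f z)) ` polydisk \<noteq> {}" using zero_polydisk by blast
    fix x assume "x \<in> (\<lambda>z. \<mu> z * cmod (Wop \<psi> \<phi> f z)) ` polydisk"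
    then obtain z where z: "z \<in> polydisk" and x: "x = \<mu> z * cmod (Wop \<psi> \<phi> f z)" by blast
    define w where "w = \<phi> z"
    have w: "w \<in> polydisk" unfolding w_def by (rule \<phi>pd[OF z])
    define \<beta> where "\<beta> = beta_f f"
    have b0: "0 \<le> \<beta>" unfolding \<beta>_def by (rule beta_nonneg[OF f(1)])
    have gr: "cmod (f w - f 0) \<le> \<beta> * (S w / 2)"
      using bloch_growth[OF f(1) w] ln_ratio_sum(1)[OF w] unfolding \<beta>_def S_def by simp
    have fw: "cmod (f w) \<le> cmod (f 0) + \<beta> * (S w / 2)"
      using gr norm_triangle_ineq2[of "f w" "f 0"] by linarith
    define m where "m = \<mu> z * cmod (\<psi> z)"
    have m0: "0 \<le> m" unfolding m_def using \<mu>pos[OF z] by simp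
    have "x = m * cmod (f w)" unfolding x m_def w_def Wop_def by (simp add: norm_mult)
    also have "\<dots> \<le> m * (cmod (f 0) + \<beta> * (S w / 2))" using fw m0 by (rule mult_left_mono)
    also have "\<dots> = m * cmod (f 0) + \<beta> * (1/2 * \<mu> z * cmod (\<psi> z) * S w)" unfolding m_def by (simp add: algebra_simps)
    also have "\<dots> \<le> M * cmod (f 0) + \<beta> * M"
    proof (rule add_mono)
      show "m * cmod (f 0) \<le> M * cmod (f 0)" using \<psi>elem[OF z] unfolding m_def M_def
        by (intro mult_right_mono) auto
      show "\<beta> * (1/2 * \<mu> z * cmod (\<psi> z) * S w) \<le> \<beta> * M" using tup[OF z] b0 unfolding M_def w_def
        by (intro mult_left_mono) auto
    qed
    also have "\<dots> = M * bloch_norm f" unfolding bloch_norm_def \<beta>_def by (simp add: algebra_simps)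
    also have "\<dots> \<le> M" using f(2) M0 by (simp add: mult_left_le)
    finally show "x \<le> M" .
  qed
  have upper: "W_norm \<mu> \<psi> \<phi> \<le> M"
    unfolding Wn
  proof (rule cSup_least)
    have "Hinf_norm \<mu> (Wop \<psi> \<phi> (\<lambda>_. 1)) \<in> WS" unfolding WS_def mem_Collect_eq
      by (intro exI[of _ "\<lambda>_. 1"] conjI refl const_bloch1) (simp add: const_bloch2)
    thus "WS \<noteq> {}" by blast
    fix x assume "x \<in> WS" thus "x \<le> M" unfolding WS_def using up by auto
  qed
  show ?thesis using bddT \<psi>le low2 upper unfolding M_def N_def by simp
qed

end
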